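(* Let $\Phi$ be a local interaction on $V$, let $\mathcal S=\{X\in\mathcal P_f(V):\Phi_X\neq0\}$, and let $\mathbf c,\mathbf u:\mathcal P_f(V)\to[0,\infty)$ satisfy, for every $Z\in\mathcal S$, $$\sum_{X\in\mathcal S}\chi(Z,X)\,\mathbf u(X)\,e^{\mathbf c(X)}\le\mathbf c(Z).$$ Then for every $Z\in\mathcal S$, $$\sum_{k=1}^\infty\sum_{[X_1,\dots,X_k]\in\mathbb S_k}\chi(Z,X_1,\dots,X_k)\prod_{j=1}^k\mathbf u(X_j)\le e^{\mathbf c(Z)}-1$$ and $$\sum_{k=1}^\infty\sum_{[X_1,\dots,X_k]\in\mathbb P_k}\chi(Z,X_1,\dots,X_k)\prod_{j=1}^k\mathbf u(X_j)\le\mathbf c(Z).$$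
   Context: $\mathcal P_f(V)$ is the set of finite subsets of a set $V$; a local interaction is a family $(\Phi_X)_{X\in\mathcal P_f(V)}$ of self-adjoint operators $\Phi_X$ acting on the sites of $X$. A finite multiset $[Y_1,\dots,Y_m]$ of finite subsets of $V$ is connected if its elements can be ordered so that each $Y_j$ ($j\ge 2$) intersects $Y_1\cup\dots\cup Y_{j-1}$; $\chi(Y_1,\dots,Y_m)=1$ if $[Y_1,\dots,Y_m]$ is connected and $0$ otherwise. $\mathbb S_k$ is the set of all multisets consisting of $k$ elements (with multiplicity) of $\mathcal S$, and $\mathbb P_k\subset\mathbb S_k$ the connected ones; in the sums each multiset is counted once. *)

theory Defs
  imports "HOL-Analysis.Analysis" "HOL-Library.Multiset"
begin

definition connected_ms :: "'v set multiset \<Rightarrow> bool" where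
  "connected_ms M \<longleftrightarrow> (\<exists>xs. mset xs = M \<and>
      (\<forall>j. 0 < j \<and> j < length xs \<longrightarrow> xs ! j \<inter> \<Union>(set (take j xs)) \<noteq> {}))"

definition chi :: "'v set multiset \<Rightarrow> real" where
  "chi M = (if connected_ms M then 1 else 0)"

definition supp_int :: "('v set \<Rightarrow> 'a::zero) \<Rightarrow> 'v set set" where
  "supp_int Phi = {X. finite X \<and> Phi X \<noteq> 0}"

definition msets_of :: "'b set \<Rightarrow> nat \<Rightarrow> 'b multiset set" where
  "msets_of S k = {M. size M = k \<and> set_mset M \<subseteq> S}"

definition conn_msets_of :: "'v set set \<Rightarrow> nat \<Rightarrow> 'v set multiset set" where
  "conn_msets_of S k = {M \<in> msets_of S k. connected_ms M}"

end

theory Submission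
  imports Defs
begin


fun ch :: "'v set \<Rightarrow> 'v set list \<Rightarrow> bool" where
  "ch B [] = True"
| "ch B (x # xs) = (x \<inter> B \<noteq> {} \<and> ch (B \<union> x) xs)"

lemma ch_nth: "ch B xs \<longleftrightarrow> (\<forall>j<length xs. xs ! j \<inter> (B \<union> \<Union>(set (take j xs))) \<noteq> {})"
proof (induction xs arbitrary: B)
  case Nil then show ?case by simp
next
  case (Cons x xs)
  show ?case
  proof
    assume h: "ch B (x # xs)"
    show "\<forall>j<length (x # xs). (x # xs) ! j \<inter> (B \<union> \<Union>(set (take j (x # xs)))) \<noteq> {}"
    proof (intro allI impI)
      fix j assume "j < length (x # xs)"
      then show "(x # xs) ! j \<inter> (B \<union> \<Union>(set (take j (x # xs)))) \<noteq> {}"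
        using h Cons.IH[of "B \<union> x"] by (cases j) (auto simp: Un_assoc)
    qed
  next
    assume h: "\<forall>j<length (x # xs). (x # xs) ! j \<inter> (B \<union> \<Union>(set (take j (x # xs)))) \<noteq> {}"
    have "x \<inter> B \<noteq> {}" using h[rule_format, of 0] by simp
    moreover have "ch (B \<union> x) xs"
      unfolding Cons.IH
    proof (intro allI impI)
      fix j assume "j < length xs"
      then show "xs ! j \<inter> (B \<union> x \<union> \<Union>(set (take j xs))) \<noteq> {}"
        using h[rule_format, of "Suc j"] by (auto simp: Un_assoc)
    qed
    ultimately show "ch B (x # xs)" by simp
  qed
qed


lemma cl_cons: "(\<forall>j. 0 < j \<and> j < length (x # xs) \<longrightarrow> (x # xs) ! j \<inter> \<Union>(set (take j (x # xs))) \<noteq> {})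
   \<longleftrightarrow> ch x xs"
  unfolding ch_nth
proof
  assume h: "\<forall>j. 0 < j \<and> j < length (x # xs) \<longrightarrow> (x # xs) ! j \<inter> \<Union>(set (take j (x # xs))) \<noteq> {}"
  show "\<forall>j<length xs. xs ! j \<inter> (x \<union> \<Union>(set (take j xs))) \<noteq> {}"
    using h by (metis Suc_less_eq length_Cons list.simps(15) nth_Cons_Suc take_Suc_Cons zero_less_Suc Union_insert)
next
  assume h: "\<forall>j<length xs. xs ! j \<inter> (x \<union> \<Union>(set (take j xs))) \<noteq> {}"
  show "\<forall>j. 0 < j \<and> j < length (x # xs) \<longrightarrow> (x # xs) ! j \<inter> \<Union>(set (take j (x # xs))) \<noteq> {}"
  proof (intro allI impI)
    fix j assume "0 < j \<and> j < length (x # xs)"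
    then obtain i where "j = Suc i" "i < length xs" by (cases j) auto
    then show "(x # xs) ! j \<inter> \<Union>(set (take j (x # xs))) \<noteq> {}" using h by auto
  qed
qed

lemma ch_mono: "ch B xs \<Longrightarrow> B \<subseteq> B' \<Longrightarrow> ch B' xs"
  by (induction xs arbitrary: B B') (auto, blast)

lemma ch_append: "ch B (xs @ ys) \<longleftrightarrow> ch B xs \<and> ch (B \<union> \<Union>(set xs)) ys"
  by (induction xs arbitrary: B) (auto simp: Un_assoc)

lemma ch_filter: "ch B xs \<Longrightarrow> B \<subseteq> B' \<Longrightarrow> (\<forall>x\<in>set xs. \<not> P x \<longrightarrow> x \<subseteq> B') \<Longrightarrow> ch B' (filter P xs)"
proof (induction xs arbitrary: B B')
  case Nil then show ?case by simp
next
  case (Cons x xs)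
  show ?case
  proof (cases "P x")
    case True
    have "x \<inter> B' \<noteq> {}" using Cons.prems by auto
    moreover have "ch (B' \<union> x) (filter P xs)"
      using Cons.IH[of "B \<union> x" "B' \<union> x"] Cons.prems by auto
    ultimately show ?thesis using True by simp
  next
    case False
    then have "x \<subseteq> B'" using Cons.prems by auto
    then show ?thesis using Cons.IH[of "B \<union> x" B'] Cons.prems False by auto
  qed
qed

lemma ch_split:
  assumes "ch W (pre @ (a \<union> b) # post)" "a \<inter> b \<noteq> {}"
  shows "\<exists>zs. mset zs = mset pre + {#a, b#} + mset post \<and> ch W zs"
proof -
  let ?U = "W \<union> \<Union>(set pre)"
  have h1: "ch W pre" and h2: "(a \<union> b) \<inter> ?U \<noteq> {}" and h3: "ch (?U \<union> (a \<union> b)) post"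
    using assms(1) by (auto simp: ch_append)
  show ?thesis
  proof (cases "a \<inter> ?U \<noteq> {}")
    case True
    have "ch W (pre @ [a, b] @ post)"
      using h1 h3 True assms(2) by (auto simp: ch_append Un_assoc)
    then show ?thesis by (intro exI[of _ "pre @ [a, b] @ post"]) auto
  next
    case False
    then have "b \<inter> ?U \<noteq> {}" using h2 by auto
    then have "ch W (pre @ [b, a] @ post)"
      using h1 h3 assms(2) by (auto simp: ch_append Un_ac)
    then show ?thesis by (intro exI[of _ "pre @ [b, a] @ post"]) auto
  qed
qed

lemma ch_reroot:
  "ch B xs \<Longrightarrow> W \<inter> (B \<union> \<Union>(set xs)) \<noteq> {} \<Longrightarrow> \<exists>ys. mset ys = add_mset B (mset xs) \<and> ch W ys"
proof (induction xs arbitrary: B)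
  case Nil
  then show ?case by (intro exI[of _ "[B]"]) auto
next
  case (Cons x xs)
  show ?case
  proof (cases "W \<inter> B \<noteq> {}")
    case True
    have "ch W (B # x # xs)" using True Cons.prems(1) ch_mono[of "B \<union> x" xs "W \<union> B \<union> x"]
      by auto
    then show ?thesis by (intro exI[of _ "B # x # xs"]) auto
  next
    case False
    have "ch (B \<union> x) xs" "x \<inter> B \<noteq> {}" using Cons.prems by auto
    moreover have "W \<inter> ((B \<union> x) \<union> \<Union>(set xs)) \<noteq> {}" using Cons.prems by auto
    ultimately obtain ys' where ys': "mset ys' = add_mset (B \<union> x) (mset xs)" "ch W ys'"
      using Cons.IH by blast
    then have "B \<union> x \<in> set ys'" by (metis list.set_intros(1) mset_eq_setD set_mset_mset union_single_eq_member)
    then obtain pre post where pp: "ys' = pre @ (B \<union> x) # post" by (meson split_list)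
    obtain zs where "mset zs = mset pre + {#B, x#} + mset post" "ch W zs"
      using ch_split[of W pre B x post] ys'(2) pp \<open>x \<inter> B \<noteq> {}\<close> by (auto simp: Int_commute)
    moreover have "mset pre + {#B, x#} + mset post = add_mset B (mset (x # xs))"
      using ys'(1) pp by auto
    ultimately show ?thesis by metis
  qed
qed

lemma ch_nonempty: "ch B xs \<Longrightarrow> y \<in> set xs \<Longrightarrow> y \<noteq> {}"
  by (induction xs arbitrary: B) auto

lemma ch_remove: "ch B (pre @ y # post) \<Longrightarrow> y \<subseteq> B \<Longrightarrow> ch B (pre @ post)"
  by (auto simp: ch_append intro: ch_mono)

lemma conn_root:
  "connected_ms (add_mset Z N) \<longleftrightarrow> (\<exists>ys. mset ys = N \<and> ch Z ys)"
proof
  assume "\<exists>ys. mset ys = N \<and> ch Z ys"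
  then obtain ys where "mset ys = N" "ch Z ys" by blast
  then show "connected_ms (add_mset Z N)"
    unfolding connected_ms_def using cl_cons[of Z ys] by (intro exI[of _ "Z # ys"]) simp
next
  assume "connected_ms (add_mset Z N)"
  then obtain L where L: "mset L = add_mset Z N"
    "\<forall>j. 0 < j \<and> j < length L \<longrightarrow> L ! j \<inter> \<Union>(set (take j L)) \<noteq> {}"
    unfolding connected_ms_def by blast
  then obtain x xs where Lx: "L = x # xs" by (cases L) auto
  then have chx: "ch x xs" using L(2) cl_cons by blast
  show "\<exists>ys. mset ys = N \<and> ch Z ys"
  proof (cases "x = Z")
    case True
    then show ?thesis using L(1) Lx chx by auto
  next
    case False
    then have "Z \<in> set xs" using L(1) Lx
      by (metis insert_iff list.simps(15) set_mset_add_mset_insert set_mset_mset)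
    then have "Z \<noteq> {}" using chx ch_nonempty by blast
    then have "Z \<inter> (x \<union> \<Union>(set xs)) \<noteq> {}" using \<open>Z \<in> set xs\<close> by auto
    then obtain ys' where ys': "mset ys' = add_mset x (mset xs)" "ch Z ys'"
      using ch_reroot[OF chx] by blast
    then have "Z \<in> set ys'" using \<open>Z \<in> set xs\<close>
      by (metis mset_eq_setD list.set_intros(2) mset.simps(2))
    then obtain pre post where pp: "ys' = pre @ Z # post" by (meson split_list)
    have "ch Z (pre @ post)" using ch_remove ys'(2) pp by blast
    moreover have "mset (pre @ post) = N" using ys'(1) pp L(1) Lx by auto
    ultimately show ?thesis by blast
  qed
qed

lemma conn_touch:
  assumes "connected_ms (add_mset Z M)" "M \<noteq> {#}"
  shows "\<exists>Y\<in>#M. Y \<inter> Z \<noteq> {}"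
proof -
  obtain ys where ys: "mset ys = M" "ch Z ys" using assms(1) conn_root by blast
  then obtain y ys' where "ys = y # ys'" using assms(2) by (cases ys) auto
  then show ?thesis using ys by auto
qed

lemma conn_merge:
  assumes "connected_ms (add_mset Z (replicate_mset m X + M'))" "X \<notin># M'"
  shows "connected_ms (add_mset (Z \<union> X) M')"
proof -
  obtain ys where ys: "mset ys = replicate_mset m X + M'" "ch Z ys" using assms(1) conn_root by blast
  have "ch (Z \<union> X) (filter (\<lambda>y. y \<noteq> X) ys)"
    by (rule ch_filter[OF ys(2)]) auto
  moreover have "mset (filter (\<lambda>y. y \<noteq> X) ys) = M'"
    using ys(1) assms(2) by (auto simp: mset_filter multiset_eq_iff count_eq_zero_iff)
  ultimately show ?thesis using conn_root by blast
qed

lemma conn_single: "connected_ms {#Z#}"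
  using conn_root[of Z "{#}"] by auto

lemma conn_pair: "Y \<inter> Z \<noteq> {} \<Longrightarrow> connected_ms {#Z, Y#}"
  using conn_root[of Z "{#Y#}"] by (intro iffD2[OF conn_root] exI[of _ "[Y]"]) auto



definition Dm :: "nat \<Rightarrow> 'b set \<Rightarrow> 'b multiset set" where
  "Dm n T = {M. set_mset M \<subseteq> T \<and> (\<forall>x. count M x \<le> n)}"

lemma Dm_empty: "Dm n {} = {{#}}"
  by (auto simp: Dm_def)

lemma Dm_decomp:
  assumes "X \<in> T"
  shows "Dm n T = (\<lambda>(m, M'). replicate_mset m X + M') ` ({0..n} \<times> Dm n (T - {X}))"
proof
  show "Dm n T \<subseteq> (\<lambda>(m, M'). replicate_mset m X + M') ` ({0..n} \<times> Dm n (T - {X}))"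
  proof
    fix M assume M: "M \<in> Dm n T"
    let ?M' = "filter_mset (\<lambda>y. y \<noteq> X) M"
    have "M = replicate_mset (count M X) X + ?M'"
      by (metis filter_eq_replicate_mset multiset_partition)
    moreover have "?M' \<in> Dm n (T - {X})" using M by (auto simp: Dm_def)
    moreover have "count M X \<in> {0..n}" using M by (auto simp: Dm_def)
    ultimately show "M \<in> (\<lambda>(m, M'). replicate_mset m X + M') ` ({0..n} \<times> Dm n (T - {X}))"
      by (intro image_eqI[of _ _ "(count M X, ?M')"]) auto
  qed
next
  show "(\<lambda>(m, M'). replicate_mset m X + M') ` ({0..n} \<times> Dm n (T - {X})) \<subseteq> Dm n T"
  proof clarify
    fix m M' assume "m \<in> {0..n}" "M' \<in> Dm n (T - {X})"
    then have "X \<notin># M'" "set_mset M' \<subseteq> T" "\<forall>x. count M' x \<le> n" "m \<le> n" by (auto simp: Dm_def)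
    then show "replicate_mset m X + M' \<in> Dm n T" using assms
      by (auto simp: Dm_def not_in_iff split: if_splits)
  qed
qed

lemma Dm_inj: "inj_on (\<lambda>(m, M'). replicate_mset m X + M') (A \<times> Dm n (T - {X}))"
proof (rule inj_onI, clarify)
  fix m M' m2 M2'
  assume h: "M' \<in> Dm n (T - {X})" "M2' \<in> Dm n (T - {X})" "replicate_mset m X + M' = replicate_mset m2 X + M2'"
  then have "X \<notin># M'" "X \<notin># M2'" by (auto simp: Dm_def)
  then have "m = m2" using arg_cong[OF h(3), of "\<lambda>M. count M X"] by (simp add: not_in_iff)
  then show "m = m2 \<and> M' = M2'" using h(3) by simp
qed

lemma Dm_finite: "finite T \<Longrightarrow> finite (Dm n T)"
proof (induction T rule: finite_induct)
  case empty then show ?case by (simp add: Dm_empty)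
next
  case (insert X T)
  then have "insert X T - {X} = T" by auto
  then show ?case using Dm_decomp[of X "insert X T" n] insert by auto
qed

lemma empty_in_Dm: "{#} \<in> Dm n T" by (simp add: Dm_def)

lemma chi_01: "chi M = 0 \<or> chi M = 1" by (simp add: chi_def)
lemma chi_ge0: "0 \<le> chi M" by (simp add: chi_def)

lemma prod_mset_nonneg': "(\<forall>x\<in>#M. 0 \<le> (f x :: real)) \<Longrightarrow> 0 \<le> prod_mset (image_mset f M)"
  by (induction M) auto

definition G :: "('v set \<Rightarrow> real) \<Rightarrow> nat \<Rightarrow> 'v set \<Rightarrow> 'v set set \<Rightarrow> real" where
  "G u n Z T = (\<Sum>M\<in>Dm n T. chi (add_mset Z M) * prod_mset (image_mset u M))"

definition wsum :: "('v set \<Rightarrow> real) \<Rightarrow> 'v set \<Rightarrow> 'v set set \<Rightarrow> real" where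
  "wsum w Z T = (\<Sum>Y\<in>T. if Y \<inter> Z \<noteq> {} then w Y else 0)"

lemma G_nonneg: "(\<And>X. X \<in> T \<Longrightarrow> 0 \<le> u X) \<Longrightarrow> 0 \<le> G u n Z T"
  unfolding G_def
  by (intro sum_nonneg mult_nonneg_nonneg chi_ge0 prod_mset_nonneg') (auto simp: Dm_def)

lemma geo: fixes x :: real assumes "0 \<le> x" "x < 1" shows "(\<Sum>m\<in>{1..n}. x ^ m) \<le> x / (1 - x)"
proof -
  have "(\<Sum>m\<in>{1..n}. x ^ m) = x * (\<Sum>i<n. x ^ i)"
    by (simp add: sum.atLeast1_atMost_eq sum_distrib_left)
  also have "\<dots> = x * ((1 - x ^ n) / (1 - x))" using assms by (simp add: sum_gp_strict)
  also have "\<dots> \<le> x * (1 / (1 - x))"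
    using assms by (intro mult_left_mono divide_right_mono) auto
  finally show ?thesis by simp
qed

lemma key:
  fixes uu a :: real
  assumes "0 \<le> uu" "0 \<le> a" "uu * exp a \<le> a"
  shows "uu < 1" "1 + uu / (1 - uu) * exp (a - uu * exp a) \<le> exp (uu * exp a)"
proof -
  define b where "b = uu * exp a"
  have b0: "0 \<le> b" using assms by (simp add: b_def)
  have ba: "b \<le> a" using assms by (simp add: b_def)
  have "a < exp a" using exp_ge_add_one_self[of a] by linarith
  then have "uu * exp a < exp a" using assms by linarith
  then show u1: "uu < 1" by simp
  have uexp: "uu = b * exp (- a)" by (simp add: b_def exp_minus field_simps)
  have "exp (- a) \<le> exp (- b)" using ba by simp
  then have ub: "uu \<le> b * exp (- b)" using uexp b0 by (simp add: mult_left_mono)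
  have eb: "1 \<le> exp b - b" "b \<le> exp b - 1" using exp_ge_add_one_self[of b] by linarith+
  have pos: "0 < exp b - b" using eb by linarith
  have "b * exp (- b) = b / exp b" by (simp add: exp_minus field_simps)
  have "1 - b * exp (- b) = (exp b - b) / exp b" by (simp add: exp_minus field_simps)
  have "uu / (1 - uu) * exp (a - b) = b * exp (- b) / (1 - uu)"
    using u1 by (simp add: uexp exp_diff exp_minus field_simps)
  also have "\<dots> \<le> b * exp (- b) / (1 - b * exp (- b))"
    using ub u1 b0 \<open>1 - b * exp (- b) = (exp b - b) / exp b\<close> pos
    by (intro divide_left_mono mult_nonneg_nonneg) auto
  also have "\<dots> = b / (exp b - b)"
    using pos by (simp add: exp_minus field_simps)
  also have "\<dots> \<le> b" using eb b0 pos by (simp add: divide_le_eq mult_le_cancel_left1)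
  also have "\<dots> \<le> exp b - 1" using eb by simp
  finally show "1 + uu / (1 - uu) * exp (a - uu * exp a) \<le> exp (uu * exp a)"
    by (simp add: b_def)
qed



lemma G_step:
  assumes fin: "finite A" and XA: "X \<in> A" and unn: "\<And>Y. Y \<in> A \<Longrightarrow> 0 \<le> u Y"
  shows "G u n Z A \<le> G u n Z (A - {X}) + (\<Sum>m\<in>{1..n}. u X ^ m) * G u n (Z \<union> X) (A - {X})"
proof -
  define D' where "D' = Dm n (A - {X})"
  define f where "f M = chi (add_mset Z M) * prod_mset (image_mset u M)" for M
  define h where "h m = (\<Sum>M'\<in>D'. f (replicate_mset m X + M'))" for m
  have finD: "finite D'" using fin by (simp add: D'_def Dm_finite)
  have D'X: "X \<notin># M'" "\<forall>y\<in>#M'. 0 \<le> u y" if "M' \<in> D'" for M'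
    using that unn by (auto simp: D'_def Dm_def)
  have "G u n Z A = sum f ((\<lambda>(m, M'). replicate_mset m X + M') ` ({0..n} \<times> D'))"
    unfolding G_def f_def D'_def using Dm_decomp[OF XA, of n] by simp
  also have "\<dots> = (\<Sum>p\<in>{0..n} \<times> D'. f (replicate_mset (fst p) X + snd p))"
    by (subst sum.reindex[OF Dm_inj[of X "{0..n}" n A, folded D'_def]]) (simp add: case_prod_beta)
  also have "\<dots> = (\<Sum>m\<in>{0..n}. h m)"
    unfolding h_def by (subst sum.cartesian_product) (simp add: case_prod_beta)
  also have "\<dots> = h 0 + (\<Sum>m\<in>{1..n}. h m)"
    by (simp add: sum.atLeast_Suc_atMost)
  also have "h 0 = G u n Z (A - {X})" by (simp add: h_def G_def f_def D'_def)
  also have "(\<Sum>m\<in>{1..n}. h m) \<le> (\<Sum>m\<in>{1..n}. u X ^ m * G u n (Z \<union> X) (A - {X}))"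
  proof (rule sum_mono)
    fix m assume "m \<in> {1..n}"
    have "h m = (\<Sum>M'\<in>D'. chi (add_mset Z (replicate_mset m X + M')) * (u X ^ m * prod_mset (image_mset u M')))"
      by (simp add: h_def f_def)
    also have "\<dots> \<le> (\<Sum>M'\<in>D'. chi (add_mset (Z \<union> X) M') * (u X ^ m * prod_mset (image_mset u M')))"
    proof (rule sum_mono)
      fix M' assume M': "M' \<in> D'"
      have nn: "0 \<le> u X ^ m * prod_mset (image_mset u M')"
        using unn[OF XA] D'X[OF M'] by (intro mult_nonneg_nonneg zero_le_power prod_mset_nonneg') auto
      have "chi (add_mset Z (replicate_mset m X + M')) \<le> chi (add_mset (Z \<union> X) M')"
        using conn_merge[of Z m X M'] D'X[OF M'] by (auto simp: chi_def)
      then show "chi (add_mset Z (replicate_mset m X + M')) * (u X ^ m * prod_mset (image_mset u M'))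
          \<le> chi (add_mset (Z \<union> X) M') * (u X ^ m * prod_mset (image_mset u M'))"
        using nn by (rule mult_right_mono)
    qed
    also have "\<dots> = u X ^ m * G u n (Z \<union> X) (A - {X})"
      by (simp add: G_def D'_def sum_distrib_left mult_ac)
    finally show "h m \<le> u X ^ m * G u n (Z \<union> X) (A - {X})" .
  qed
  also have "(\<Sum>m\<in>{1..n}. u X ^ m * G u n (Z \<union> X) (A - {X})) = (\<Sum>m\<in>{1..n}. u X ^ m) * G u n (Z \<union> X) (A - {X})"
    by (simp add: sum_distrib_right)
  finally show ?thesis by simp
qed

lemma G_trivial:
  assumes fin: "finite A" and no: "\<forall>X\<in>A. X \<inter> Z = {}"
  shows "G u n Z A = 1"
proof -
  have "G u n Z A = (\<Sum>M\<in>Dm n A. if M = {#} then 1 else 0)"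
    unfolding G_def
  proof (rule sum.cong[OF refl])
    fix M assume M: "M \<in> Dm n A"
    show "chi (add_mset Z M) * prod_mset (image_mset u M) = (if M = {#} then 1 else 0)"
    proof (cases "M = {#}")
      case True then show ?thesis by (simp add: chi_def conn_single)
    next
      case False
      have "\<not> connected_ms (add_mset Z M)"
        using conn_touch[of Z M] False M no by (auto simp: Dm_def)
      then show ?thesis using False by (simp add: chi_def)
    qed
  qed
  also have "\<dots> = 1" using Dm_finite[OF fin] empty_in_Dm[of n A] by (simp add: sum.delta)
  finally show ?thesis .
qed

lemma wsum_remove: "finite A \<Longrightarrow> X \<in> A \<Longrightarrow> X \<inter> Z \<noteq> {} \<Longrightarrow> wsum w Z A = w X + wsum w Z (A - {X})"
  unfolding wsum_def by (simp add: sum.remove)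

lemma wsum_nonneg: "(\<And>Y. Y \<in> A \<Longrightarrow> 0 \<le> w Y) \<Longrightarrow> 0 \<le> wsum w Z A"
  unfolding wsum_def by (intro sum_nonneg) auto

lemma wsum_union: "(\<And>Y. Y \<in> A \<Longrightarrow> 0 \<le> w Y) \<Longrightarrow> wsum w (Z \<union> X) A \<le> wsum w Z A + wsum w X A"
  unfolding wsum_def sum.distrib[symmetric] by (intro sum_mono) auto

lemma core:
  fixes u c :: "'v set \<Rightarrow> real"
  assumes fin: "finite T" and TS: "T \<subseteq> S"
   and unn: "\<And>X. X \<in> S \<Longrightarrow> 0 \<le> u X" and cnn: "\<And>X. X \<in> S \<Longrightarrow> 0 \<le> c X"
   and hs: "\<And>X T'. X \<in> S \<Longrightarrow> finite T' \<Longrightarrow> T' \<subseteq> S \<Longrightarrow> wsum (\<lambda>Y. u Y * exp (c Y)) X T' \<le> c X"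
  shows "G u n Z T \<le> exp (wsum (\<lambda>Y. u Y * exp (c Y)) Z T)"
proof -
  define w where "w Y = u Y * exp (c Y)" for Y
  have w_eq: "w = (\<lambda>Y. u Y * exp (c Y))" by (simp add: w_def fun_eq_iff)
  have wnn: "0 \<le> w Y" if "Y \<in> S" for Y using unn[OF that] by (simp add: w_def)
  have "\<forall>Z. G u n Z T \<le> exp (wsum w Z T)"
    using fin
  proof (induction T rule: finite_remove_induct)
    case empty
    then show ?case using G_trivial[of "{}" _ u n] by (simp add: wsum_def)
  next
    case (remove A)
    have AS: "A \<subseteq> S" using remove.hyps(3) TS by auto
    show ?case
    proof
      fix Z
      show "G u n Z A \<le> exp (wsum w Z A)"
      proof (cases "\<exists>X\<in>A. X \<inter> Z \<noteq> {}")
        case False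
        then have "\<forall>X\<in>A. X \<inter> Z = {}" by blast
        then have "G u n Z A = 1" by (rule G_trivial[OF remove.hyps(1)])
        moreover have "0 \<le> wsum w Z A" using wnn AS by (intro wsum_nonneg) auto
        ultimately show ?thesis by simp
      next
        case True
        then obtain X where XA: "X \<in> A" and XZ: "X \<inter> Z \<noteq> {}" by blast
        have XS: "X \<in> S" using XA AS by auto
        define A' where "A' = A - {X}"
        have finA': "finite A'" using remove.hyps(1) by (simp add: A'_def)
        have A'S: "A' \<subseteq> S" using AS by (auto simp: A'_def)
        let ?uu = "u X" and ?a = "c X"
        define b where "b = ?uu * exp ?a"
        define \<sigma> where "\<sigma> = wsum w Z A'"
        define \<tau> where "\<tau> = wsum w X A'"
        have IH: "\<And>Z. G u n Z A' \<le> exp (wsum w Z A')" using remove.IH[OF XA] by (simp add: A'_def)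
        have sA: "wsum w Z A = b + \<sigma>"
          using wsum_remove[OF remove.hyps(1) XA XZ] by (simp add: \<sigma>_def b_def w_def A'_def)
        have "X \<noteq> {}" using XZ by auto
        then have "wsum w X A = b + \<tau>"
          using wsum_remove[OF remove.hyps(1) XA, of X w] by (simp add: \<tau>_def b_def w_def A'_def)
        moreover have "wsum w X A \<le> ?a" using hs[OF XS remove.hyps(1) AS] unfolding w_eq .
        ultimately have tau: "\<tau> \<le> ?a - b" by simp
        have t0: "0 \<le> \<tau>" unfolding \<tau>_def using wnn A'S by (intro wsum_nonneg) auto
        have b_le: "b \<le> ?a" using tau t0 by simp
        have k: "?uu < 1" "1 + ?uu / (1 - ?uu) * exp (?a - b) \<le> exp b"
          using key[of ?uu ?a] unn[OF XS] cnn[OF XS] b_le by (auto simp: b_def)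
        have g1: "G u n Z A' \<le> exp \<sigma>" using IH by (simp add: \<sigma>_def)
        have "G u n (Z \<union> X) A' \<le> exp (wsum w (Z \<union> X) A')" using IH by simp
        also have "\<dots> \<le> exp (\<sigma> + \<tau>)"
          using wsum_union[of A' w Z X] wnn A'S unfolding \<sigma>_def \<tau>_def by (simp add: subset_iff)
        also have "\<dots> \<le> exp (\<sigma> + (?a - b))" using tau by simp
        finally have g2: "G u n (Z \<union> X) A' \<le> exp (\<sigma> + (?a - b))" .
        have G2nn: "0 \<le> G u n (Z \<union> X) A'" using unn A'S by (intro G_nonneg) auto
        have geo': "(\<Sum>m\<in>{1..n}. ?uu ^ m) \<le> ?uu / (1 - ?uu)" by (rule geo[OF unn[OF XS] k(1)])
        have snn: "0 \<le> (\<Sum>m\<in>{1..n}. ?uu ^ m)" using unn[OF XS] by (intro sum_nonneg) auto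
        have "G u n Z A \<le> G u n Z A' + (\<Sum>m\<in>{1..n}. ?uu ^ m) * G u n (Z \<union> X) A'"
          unfolding A'_def by (rule G_step[OF remove.hyps(1) XA]) (use unn AS in auto)
        also have "\<dots> \<le> exp \<sigma> + ?uu / (1 - ?uu) * exp (\<sigma> + (?a - b))"
          using g1 g2 geo' snn G2nn by (intro add_mono mult_mono) simp_all
        also have "\<dots> = exp \<sigma> * (1 + ?uu / (1 - ?uu) * exp (?a - b))"
          by (simp only: exp_add distrib_left mult_1_right mult.left_commute[of "exp \<sigma>"])
        also have "\<dots> \<le> exp \<sigma> * exp b" using k(2) by simp
        also have "\<dots> = exp (wsum w Z A)" using sA by (simp add: exp_add)
        finally show ?thesis .
      qed
    qed
  qed
  then show ?thesis unfolding w_eq by blast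
qed



lemma Dm_diff: "M \<in> Dm n T \<Longrightarrow> M - N \<in> Dm n T"
  unfolding Dm_def by (auto dest: in_diffD intro: le_trans[OF diff_le_self])

lemma first_finite:
  fixes u c :: "'v set \<Rightarrow> real"
  assumes fin: "finite T" and TS: "T \<subseteq> S"
   and unn: "\<And>X. X \<in> S \<Longrightarrow> 0 \<le> u X" and cnn: "\<And>X. X \<in> S \<Longrightarrow> 0 \<le> c X"
   and hs: "\<And>X T'. X \<in> S \<Longrightarrow> finite T' \<Longrightarrow> T' \<subseteq> S \<Longrightarrow> wsum (\<lambda>Y. u Y * exp (c Y)) X T' \<le> c X"
   and ZS: "Z \<in> S" and F: "F \<subseteq> Dm n T - {{#}}"
  shows "(\<Sum>M\<in>F. chi (add_mset Z M) * prod_mset (image_mset u M)) \<le> exp (c Z) - 1"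
proof -
  let ?g = "\<lambda>M. chi (add_mset Z M) * prod_mset (image_mset u M)"
  have finD: "finite (Dm n T)" using fin by (rule Dm_finite)
  have gnn: "0 \<le> ?g M" if "M \<in> Dm n T" for M
    using that unn TS by (intro mult_nonneg_nonneg chi_ge0 prod_mset_nonneg') (auto simp: Dm_def)
  have "(\<Sum>M\<in>F. ?g M) \<le> (\<Sum>M\<in>Dm n T - {{#}}. ?g M)"
    using F finD gnn by (intro sum_mono2) auto
  also have "\<dots> = G u n Z T - ?g {#}"
    unfolding G_def using finD empty_in_Dm[of n T] by (simp add: sum_diff1)
  also have "?g {#} = 1" by (simp add: chi_def conn_single)
  also have "G u n Z T \<le> exp (wsum (\<lambda>Y. u Y * exp (c Y)) Z T)"
    by (rule core[OF fin TS unn cnn hs])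
  also have "\<dots> \<le> exp (c Z)" using hs[OF ZS fin TS] by simp
  finally show ?thesis by simp
qed

lemma second_finite:
  fixes u c :: "'v set \<Rightarrow> real"
  assumes fin: "finite T" and TS: "T \<subseteq> S"
   and unn: "\<And>X. X \<in> S \<Longrightarrow> 0 \<le> u X" and cnn: "\<And>X. X \<in> S \<Longrightarrow> 0 \<le> c X"
   and hs: "\<And>X T'. X \<in> S \<Longrightarrow> finite T' \<Longrightarrow> T' \<subseteq> S \<Longrightarrow> wsum (\<lambda>Y. u Y * exp (c Y)) X T' \<le> c X"
   and ZS: "Z \<in> S" and F: "F \<subseteq> Dm n T" and Fc: "\<And>M. M \<in> F \<Longrightarrow> connected_ms M \<and> M \<noteq> {#}"
  shows "(\<Sum>M\<in>F. chi (add_mset Z M) * prod_mset (image_mset u M)) \<le> c Z"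
proof -
  define g where "g Y M = chi (add_mset Y M) * prod_mset (image_mset u M)" for Y M
  define w where "w Y = u Y * exp (c Y)" for Y
  have finD: "finite (Dm n T)" using fin by (rule Dm_finite)
  have finF: "finite F" using F finD finite_subset by blast
  have gnn: "0 \<le> g Y M" if "M \<in> Dm n T" for Y M
    using that unn TS by (unfold g_def, intro mult_nonneg_nonneg chi_ge0 prod_mset_nonneg') (auto simp: Dm_def)
  define t where "t Y M = (if Y \<inter> Z \<noteq> {} \<and> Y \<in># M then u Y * g Y (M - {#Y#}) else 0)" for Y M
  have tnn: "0 \<le> t Y M" if "Y \<in> T" "M \<in> Dm n T" for Y M
  proof -
    have "M - {#Y#} \<in> Dm n T" using that(2) by (rule Dm_diff)
    then show ?thesis using gnn unn that TS by (auto simp: t_def)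
  qed
  have "(\<Sum>M\<in>F. g Z M) \<le> (\<Sum>M\<in>F. \<Sum>Y\<in>T. t Y M)"
  proof (rule sum_mono)
    fix M assume MF: "M \<in> F"
    then have MD: "M \<in> Dm n T" using F by auto
    show "g Z M \<le> (\<Sum>Y\<in>T. t Y M)"
    proof (cases "connected_ms (add_mset Z M)")
      case False
      then show ?thesis using tnn MD by (auto simp: g_def chi_def intro: sum_nonneg)
    next
      case True
      then obtain Y where Y: "Y \<in># M" "Y \<inter> Z \<noteq> {}" using conn_touch Fc[OF MF] by blast
      then have YT: "Y \<in> T" using MD by (auto simp: Dm_def)
      have Mre: "add_mset Y (M - {#Y#}) = M" using Y(1) by simp
      have "g Z M = prod_mset (image_mset u M)" using True by (simp add: g_def chi_def)
      also have "\<dots> = u Y * prod_mset (image_mset u (M - {#Y#}))"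
        by (subst Mre[symmetric]) simp
      also have "\<dots> = t Y M" using Y Fc[OF MF] Mre by (simp add: t_def g_def chi_def)
      also have "\<dots> \<le> (\<Sum>Y\<in>T. t Y M)"
        using tnn MD YT fin by (intro member_le_sum) auto
      finally show ?thesis .
    qed
  qed
  also have "\<dots> = (\<Sum>Y\<in>T. \<Sum>M\<in>F. t Y M)" by (rule sum.swap)
  also have "\<dots> \<le> (\<Sum>Y\<in>T. if Y \<inter> Z \<noteq> {} then w Y else 0)"
  proof (rule sum_mono)
    fix Y assume YT: "Y \<in> T"
    show "(\<Sum>M\<in>F. t Y M) \<le> (if Y \<inter> Z \<noteq> {} then w Y else 0)"
    proof (cases "Y \<inter> Z \<noteq> {}")
      case False then show ?thesis by (simp add: t_def)
    next
      case True
      have "(\<Sum>M\<in>F. t Y M) = (\<Sum>M\<in>F \<inter> {M. Y \<in># M}. u Y * g Y (M - {#Y#}))"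
        using finF True by (simp add: t_def sum.inter_filter Int_def)
      also have "\<dots> = (\<Sum>M'\<in>(\<lambda>M. M - {#Y#}) ` (F \<inter> {M. Y \<in># M}). u Y * g Y M')"
      proof (rule sum.reindex[symmetric, unfolded comp_def])
        show "inj_on (\<lambda>M. M - {#Y#}) (F \<inter> {M. Y \<in># M})"
          by (rule inj_onI) (metis IntD2 insert_DiffM mem_Collect_eq)
      qed
      also have "\<dots> \<le> (\<Sum>M'\<in>Dm n T. u Y * g Y M')"
      proof (rule sum_mono2[OF finD])
        show "(\<lambda>M. M - {#Y#}) ` (F \<inter> {M. Y \<in># M}) \<subseteq> Dm n T"
          using F Dm_diff by blast
        show "\<And>b. b \<in> Dm n T - (\<lambda>M. M - {#Y#}) ` (F \<inter> {M. Y \<in># M}) \<Longrightarrow> 0 \<le> u Y * g Y b"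
          using gnn unn YT TS by (auto intro: mult_nonneg_nonneg)
      qed
      also have "\<dots> = u Y * G u n Y T" by (simp add: G_def g_def sum_distrib_left)
      also have "\<dots> \<le> u Y * exp (c Y)"
      proof (rule mult_left_mono)
        have YS: "Y \<in> S" using YT TS by auto
        have "G u n Y T \<le> exp (wsum (\<lambda>Y. u Y * exp (c Y)) Y T)"
          by (rule core[OF fin TS unn cnn hs])
        also have "\<dots> \<le> exp (c Y)" using hs[OF YS fin TS] by simp
        finally show "G u n Y T \<le> exp (c Y)" .
        show "0 \<le> u Y" using unn YT TS by auto
      qed
      finally show ?thesis using True by (simp add: w_def)
    qed
  qed
  also have "\<dots> = wsum w Z T" by (simp add: wsum_def)
  also have "\<dots> \<le> c Z" using hs[OF ZS fin TS] by (simp add: w_def[abs_def])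
  finally show ?thesis by (simp add: g_def)
qed



lemma top_bound:
  fixes g :: "'b multiset \<Rightarrow> real" and A :: "nat \<Rightarrow> 'b multiset set"
  assumes Ak: "\<And>k. A k \<subseteq> msets_of S k"
   and gnn: "\<And>M. set_mset M \<subseteq> S \<Longrightarrow> 0 \<le> g M"
   and bnd: "\<And>T n F. finite T \<Longrightarrow> T \<subseteq> S \<Longrightarrow> F \<subseteq> Dm n T - {{#}} \<Longrightarrow> F \<subseteq> (\<Union>k\<in>{1..}. A k) \<Longrightarrow> sum g F \<le> B"
   and B0: "0 \<le> B"
  shows "(\<Sum>\<^sub>\<infinity>k\<in>{1..}. \<Sum>\<^sub>\<infinity>M\<in>A k. ennreal (g M)) \<le> ennreal B"
proof (rule infsum_le_finite_sums)
  show "(\<lambda>k. \<Sum>\<^sub>\<infinity>M\<in>A k. ennreal (g M)) summable_on {1..}" by (rule nonneg_summable_on_complete) simp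
  fix K :: "nat set" assume K: "finite K" "K \<subseteq> {1..}"
  have "(\<Sum>k\<in>K. \<Sum>\<^sub>\<infinity>M\<in>A k. ennreal (g M)) = (\<Sum>\<^sub>\<infinity>M\<in>(\<Union>k\<in>K. A k). ennreal (g M))"
  proof (rule sum_infsum[OF K(1)])
    show "\<And>a. a \<in> K \<Longrightarrow> (\<lambda>M. ennreal (g M)) summable_on A a" by (rule nonneg_summable_on_complete) simp
    fix a a' :: nat assume "a \<noteq> a'"
    then show "A a \<inter> A a' = {}" using Ak[of a] Ak[of a'] by (auto simp: msets_of_def)
  qed
  also have "\<dots> \<le> ennreal B"
  proof (rule infsum_le_finite_sums)
    show "(\<lambda>M. ennreal (g M)) summable_on (\<Union>k\<in>K. A k)" by (rule nonneg_summable_on_complete) simp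
    fix F assume F: "finite F" "F \<subseteq> (\<Union>k\<in>K. A k)"
    define T where "T = \<Union>(set_mset ` F)"
    define n where "n = (\<Sum>M\<in>F. size M)"
    have FS: "set_mset M \<subseteq> S \<and> size M \<ge> 1" if MF: "M \<in> F" for M
    proof -
      obtain k where k: "k \<in> K" "M \<in> A k" using MF F(2) by blast
      then have "M \<in> msets_of S k" "k \<ge> 1" using Ak K(2) by auto
      then show ?thesis by (simp add: msets_of_def)
    qed
    have TS: "T \<subseteq> S" "finite T" using FS F(1) by (auto simp: T_def)
    have "F \<subseteq> Dm n T - {{#}}"
    proof
      fix M assume M: "M \<in> F"
      have "size M \<le> n" unfolding n_def using M F(1) by (intro member_le_sum) auto
      then have "\<forall>x. count M x \<le> n" by (auto intro: le_trans[OF count_le_size])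
      moreover have "M \<noteq> {#}" using FS[OF M] by auto
      ultimately show "M \<in> Dm n T - {{#}}" using M by (auto simp: Dm_def T_def)
    qed
    moreover have "F \<subseteq> (\<Union>k\<in>{1..}. A k)" using F(2) K(2) by blast
    ultimately have "sum g F \<le> B" by (rule bnd[OF TS(2) TS(1)])
    moreover have "(\<Sum>M\<in>F. ennreal (g M)) = ennreal (sum g F)"
      using gnn FS by (intro sum_ennreal) auto
    ultimately show "(\<Sum>M\<in>F. ennreal (g M)) \<le> ennreal B" using B0 by simp
  qed
  finally show "(\<Sum>k\<in>K. \<Sum>\<^sub>\<infinity>M\<in>A k. ennreal (g M)) \<le> ennreal B" .
qed

theorem lemma3p12:
  fixes Phi :: "'v set \<Rightarrow> 'a::zero"
    and c u :: "'v set \<Rightarrow> real"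
  assumes c_nonneg: "\<And>X. finite X \<Longrightarrow> c X \<ge> 0"
    and u_nonneg: "\<And>X. finite X \<Longrightarrow> u X \<ge> 0"
    and hyp: "\<And>Z. Z \<in> supp_int Phi \<Longrightarrow>
      (\<Sum>\<^sub>\<infinity>X\<in>supp_int Phi. ennreal (chi {#Z, X#} * u X * exp (c X))) \<le> ennreal (c Z)"
  shows "\<forall>Z\<in>supp_int Phi.
      (\<Sum>\<^sub>\<infinity>k\<in>{1..}. \<Sum>\<^sub>\<infinity>M\<in>msets_of (supp_int Phi) k.
          ennreal (chi (add_mset Z M) * prod_mset (image_mset u M)))
        \<le> ennreal (exp (c Z) - 1)
    \<and> (\<Sum>\<^sub>\<infinity>k\<in>{1..}. \<Sum>\<^sub>\<infinity>M\<in>conn_msets_of (supp_int Phi) k.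
          ennreal (chi (add_mset Z M) * prod_mset (image_mset u M)))
        \<le> ennreal (c Z)"
proof
  fix Z assume ZS: "Z \<in> supp_int Phi"
  define S where "S = supp_int Phi"
  have ZS': "Z \<in> S" using ZS by (simp add: S_def)
  have unn: "\<And>X. X \<in> S \<Longrightarrow> 0 \<le> u X" using u_nonneg by (auto simp: S_def supp_int_def)
  have cnn: "\<And>X. X \<in> S \<Longrightarrow> 0 \<le> c X" using c_nonneg by (auto simp: S_def supp_int_def)
  have hs: "wsum (\<lambda>Y. u Y * exp (c Y)) X T' \<le> c X" if XS: "X \<in> S" and fT: "finite T'" and TS: "T' \<subseteq> S" for X T'
  proof -
    let ?h = "\<lambda>Y. chi {#X, Y#} * u Y * exp (c Y)"
    have hnn: "0 \<le> ?h Y" if "Y \<in> S" for Y using unn[OF that] chi_ge0 by (intro mult_nonneg_nonneg) auto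
    have "wsum (\<lambda>Y. u Y * exp (c Y)) X T' \<le> sum ?h T'"
      unfolding wsum_def
    proof (rule sum_mono)
      fix Y assume "Y \<in> T'"
      then have "0 \<le> u Y" using unn TS by auto
      then show "(if Y \<inter> X \<noteq> {} then u Y * exp (c Y) else 0) \<le> ?h Y"
        using conn_pair[of Y X] by (auto simp: chi_def)
    qed
    moreover have "ennreal (sum ?h T') = (\<Sum>Y\<in>T'. ennreal (?h Y))"
      using hnn TS by (intro sum_ennreal[symmetric]) auto
    moreover have "(\<Sum>Y\<in>T'. ennreal (?h Y)) \<le> (\<Sum>\<^sub>\<infinity>Y\<in>S. ennreal (?h Y))"
    proof -
      have "(\<Sum>Y\<in>T'. ennreal (?h Y)) = (\<Sum>\<^sub>\<infinity>Y\<in>T'. ennreal (?h Y))" using fT by simp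
      also have "\<dots> \<le> (\<Sum>\<^sub>\<infinity>Y\<in>S. ennreal (?h Y))"
        by (rule infsum_mono_neutral) (use TS in \<open>auto intro: nonneg_summable_on_complete\<close>)
      finally show ?thesis .
    qed
    moreover have "(\<Sum>\<^sub>\<infinity>Y\<in>S. ennreal (?h Y)) \<le> ennreal (c X)"
      using hyp XS by (simp add: S_def)
    ultimately have "ennreal (sum ?h T') \<le> ennreal (c X)" by simp
    then have "sum ?h T' \<le> c X" using cnn[OF XS] by simp
    with \<open>wsum _ X T' \<le> sum ?h T'\<close> show ?thesis by simp
  qed
  have gnn: "0 \<le> chi (add_mset Z M) * prod_mset (image_mset u M)" if "set_mset M \<subseteq> S" for M
    using that unn by (intro mult_nonneg_nonneg chi_ge0 prod_mset_nonneg') auto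
  have 1: "(\<Sum>\<^sub>\<infinity>k\<in>{1..}. \<Sum>\<^sub>\<infinity>M\<in>msets_of S k.
          ennreal (chi (add_mset Z M) * prod_mset (image_mset u M))) \<le> ennreal (exp (c Z) - 1)"
  proof (rule top_bound[where S = S])
    fix T n F assume h: "finite T" "T \<subseteq> S" "F \<subseteq> Dm n T - {{#}}" "F \<subseteq> (\<Union>k\<in>{1..}. msets_of S k)"
    show "(\<Sum>M\<in>F. chi (add_mset Z M) * prod_mset (image_mset u M)) \<le> exp (c Z) - 1"
      by (rule first_finite[OF h(1,2) unn cnn hs ZS' h(3)])
  next
    show "0 \<le> exp (c Z) - 1" using cnn[OF ZS'] by simp
  next
    fix M :: "'v set multiset" assume "set_mset M \<subseteq> S"
    then show "0 \<le> chi (add_mset Z M) * prod_mset (image_mset u M)" by (rule gnn)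
  next
    fix k show "msets_of S k \<subseteq> msets_of S k" by (rule subset_refl)
  qed
  have 2: "(\<Sum>\<^sub>\<infinity>k\<in>{1..}. \<Sum>\<^sub>\<infinity>M\<in>conn_msets_of S k.
          ennreal (chi (add_mset Z M) * prod_mset (image_mset u M))) \<le> ennreal (c Z)"
  proof (rule top_bound[where S = S])
    show "\<And>k. conn_msets_of S k \<subseteq> msets_of S k" by (auto simp: conn_msets_of_def)
    fix T n F assume h: "finite T" "T \<subseteq> S" "F \<subseteq> Dm n T - {{#}}" "F \<subseteq> (\<Union>k\<in>{1..}. conn_msets_of S k)"
    show "(\<Sum>M\<in>F. chi (add_mset Z M) * prod_mset (image_mset u M)) \<le> c Z"
    proof (rule second_finite[OF h(1,2) unn cnn hs ZS'])
      show "F \<subseteq> Dm n T" using h(3) by blast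
      fix M assume "M \<in> F"
      then show "connected_ms M \<and> M \<noteq> {#}" using h(3,4) by (auto simp: conn_msets_of_def)
    qed
  next
    show "0 \<le> c Z" by (rule cnn[OF ZS'])
  next
    fix M :: "'v set multiset" assume "set_mset M \<subseteq> S"
    then show "0 \<le> chi (add_mset Z M) * prod_mset (image_mset u M)" by (rule gnn)
  qed
  show "(\<Sum>\<^sub>\<infinity>k\<in>{1..}. \<Sum>\<^sub>\<infinity>M\<in>msets_of (supp_int Phi) k.
          ennreal (chi (add_mset Z M) * prod_mset (image_mset u M)))
        \<le> ennreal (exp (c Z) - 1)
    \<and> (\<Sum>\<^sub>\<infinity>k\<in>{1..}. \<Sum>\<^sub>\<infinity>M\<in>conn_msets_of (supp_int Phi) k.
          ennreal (chi (add_mset Z M) * prod_mset (image_mset u M)))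
        \<le> ennreal (c Z)"
    using 1 2 unfolding S_def by (rule conjI)
qed


end
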